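(* Let $v,a,b,c\in\mathbb{C}$ with $\Re(v)<4$, $\Re(c)>0$, and $\Re(vc+a+b)>0$, $\Re(vc+a-b)>0$, $\Re(vc-a+b)>0$, $\Re(vc-a-b)>0$. Put $\sigma_3=\frac v2-\frac{a}{2c}-\frac{b}{2c}$, $\sigma_4=\frac v2-\frac{a}{2c}+\frac{b}{2c}$, $\sigma_5=\frac v2+\frac{a}{2c}+\frac{b}{2c}$, $\sigma_6=\frac v2+\frac{a}{2c}-\frac{b}{2c}$, $P=(vc-a-b)(vc+a+b)(vc-a+b)(vc+a-b)$, and assume $\frac v2\notin\mathbb{Z}_0^-$, $1+\sigma_j\notin\mathbb{Z}_0^-$ ($j=3,4,5,6$). Then $$ \int_0^\infty\frac{\sinh(ax)\sinh(bx)}{\cosh^{v}(cx)}\,dx=\frac{2^{v+1}\,v\,a\,b\,c}{P}\;{}_6F_5\!\left(\begin{matrix}v,\ 1+\frac v2,\ \sigma_3,\ \sigma_5,\ \sigma_4,\ \sigma_6\\ \frac v2,\ 1+\sigma_3,\ 1+\sigma_5,\ 1+\sigma_4,\ 1+\sigma_6\end{matrix};\,-1\right). $$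
   Context: $\mathbb{Z}_0^-=\{0,-1,-2,\dots\}$. The Pochhammer symbol is $(\lambda)_0=1$, $(\lambda)_n=\lambda(\lambda+1)\cdots(\lambda+n-1)$ for $n\ge1$. The generalized hypergeometric series is ${}_pF_q\!\left(\begin{matrix}\alpha_1,\dots,\alpha_p\\ \beta_1,\dots,\beta_q\end{matrix};z\right)=\sum_{n=0}^\infty\frac{(\alpha_1)_n\cdots(\alpha_p)_n}{(\beta_1)_n\cdots(\beta_q)_n}\frac{z^n}{n!}$ (with no $\beta_j\in\mathbb{Z}_0^-$); when $p=q+1$ and $z=-1$ it converges if $\Re(\sum\beta_j-\sum\alpha_i)>-1$. For $\Re(c)>0$ and $x>0$, the complex power $\cosh^{v}(cx)$ means $2^{-v}e^{vcx}(1+e^{-2cx})^{v}$, with the principal branch of $(1+e^{-2cx})^{v}$ (this agrees with the ordinary real power when $c>0$ and $v$ is real). *)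

theory Defs
  imports "HOL-Analysis.Analysis"
begin

definition hypergeom_pFq :: "complex list \<Rightarrow> complex list \<Rightarrow> complex \<Rightarrow> complex" where
  "hypergeom_pFq as bs z =
     (\<Sum>n. (\<Prod>a\<leftarrow>as. pochhammer a n) / (\<Prod>b\<leftarrow>bs. pochhammer b n) * z ^ n / of_nat (fact n))"

definition cosh_pow :: "complex \<Rightarrow> complex \<Rightarrow> complex" where
  "cosh_pow v w = 2 powr (-v) * exp (v * w) * (1 + exp (-2 * w)) powr v"

end

theory Submission
  imports Defs "HOL-Real_Asymp.Real_Asymp"
begin

lemma norm_cosh_le: "norm (cosh (w::complex)) \<le> exp \<bar>Re w\<bar>"
proof -
  have "norm (cosh w) = norm (exp w + exp (-w)) / 2"
    by (simp add: cosh_def norm_divide)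
  also have "\<dots> \<le> (norm (exp w) + norm (exp (-w))) / 2"
    by (intro divide_right_mono norm_triangle_ineq) auto
  also have "\<dots> = (exp (Re w) + exp (- Re w)) / 2" by simp
  also have "\<dots> \<le> exp \<bar>Re w\<bar>" by (cases "Re w \<ge> 0") auto
  finally show ?thesis .
qed

lemma norm_sinh_le: "norm (sinh (z::complex)) \<le> norm z * exp \<bar>Re z\<bar>"
proof -
  have "norm (sinh z - sinh 0) \<le> exp \<bar>Re z\<bar> * norm (z - 0)"
  proof (rule field_differentiable_bound[of "closed_segment 0 z" sinh cosh])
    fix w assume "w \<in> closed_segment 0 z"
    then obtain u where u: "0 \<le> u" "u \<le> 1" "w = u *\<^sub>R z"
      by (auto simp: closed_segment_def)
    have "\<bar>Re w\<bar> \<le> \<bar>Re z\<bar>" using u by (auto simp: abs_mult intro: mult_left_le_one_le)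
    then show "norm (cosh w) \<le> exp \<bar>Re z\<bar>"
      using norm_cosh_le[of w] by (meson exp_le_cancel_iff order_trans)
    show "(sinh has_field_derivative cosh w) (at w within closed_segment 0 z)"
      by (auto intro!: derivative_eq_intros)
  qed auto
  then show ?thesis by (simp add: mult.commute)
qed


lemma improper_FTC:
  fixes f F :: "real \<Rightarrow> 'a::euclidean_space" and g :: "real \<Rightarrow> real"
  assumes der: "\<And>x. x \<ge> 0 \<Longrightarrow> (F has_vector_derivative f x) (at x)"
    and lim: "(\<lambda>n. F (real n)) \<longlonglongrightarrow> L"
    and g: "g integrable_on {0..}" and bnd: "\<And>x. x \<ge> 0 \<Longrightarrow> norm (f x) \<le> g x"
  shows "(f has_integral (L - F 0)) {0<..}"
proof -
  define fn where "fn = (\<lambda>n x. if x \<in> {0..real n} then f x else 0)"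
  have int: "(fn n has_integral (F (real n) - F 0)) {0..}" for n
  proof -
    have "(f has_integral (F (real n) - F 0)) {0..real n}"
      by (rule fundamental_theorem_of_calculus) (simp_all add: has_vector_derivative_at_within der)
    then show ?thesis unfolding fn_def
      using has_integral_restrict[of "{0..real n}" "{0..}" f] by simp
  qed
  have i1: "fn k integrable_on {0..}" for k using int by blast
  have i2: "norm (fn k x) \<le> g x" if "x \<in> {0..}" for k x
  proof -
    have "norm (f x) \<le> g x" using bnd[of x] that by simp
    then have "0 \<le> g x" using norm_ge_zero[of "f x"] by linarith
    then show ?thesis using bnd[of x] that by (simp add: fn_def)
  qed
  have i3: "(\<lambda>k. fn k x) \<longlonglongrightarrow> f x" if "x \<in> {0..}" for x
  proof (rule tendsto_eventually)
    obtain N where "x \<le> real N" using real_arch_simple by blast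
    then show "\<forall>\<^sub>F k in sequentially. fn k x = f x"
      using that unfolding eventually_sequentially fn_def
      by (intro exI[of _ N]) simp
  qed
  note dc = dominated_convergence[of fn "{0..}" g, OF i1 g i2 i3]
  have "(\<lambda>n. integral {0..} (fn n)) \<longlonglongrightarrow> L - F 0"
  proof -
    have "integral {0..} (fn n) = F (real n) - F 0" for n using int[of n] by (rule integral_unique)
    then show ?thesis using tendsto_diff[OF lim tendsto_const[of "F 0"]] by simp
  qed
  then have "integral {0..} f = L - F 0" using dc(2) LIMSEQ_unique by blast
  then have "(f has_integral (L - F 0)) {0..}"
    using dc(1) integrable_integral by metis
  moreover have "negligible {x \<in> {0..} - {0<..}. f x \<noteq> 0}"
    by (rule negligible_subset[of "{0}"]) auto
  moreover have "negligible {x \<in> {0<..} - {0..}. f x \<noteq> (0::'a)}"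
    by (rule negligible_subset[of "{}"]) auto
  ultimately show ?thesis using has_integral_spike_set_eq by blast
qed

lemma exp_integral:
  fixes s :: complex assumes s: "Re s > 0"
  shows "((\<lambda>x::real. exp (-(s * of_real x))) has_integral 1/s) {0<..}"
proof -
  have "((\<lambda>x::real. exp (-(s * of_real x))) has_integral (0 - (- exp (-(s * of_real 0)) / s))) {0<..}"
  proof (rule improper_FTC[where g="\<lambda>x. exp (-(Re s) * x)"])
    fix x :: real
    have "((\<lambda>z. - exp (-(s * z)) / s) has_field_derivative exp (-(s * of_real x))) (at (of_real x))"
      using s by (auto intro!: derivative_eq_intros simp: field_simps)
    then show "((\<lambda>x. - exp (-(s * of_real x)) / s) has_vector_derivative exp (-(s * of_real x))) (at x)"
      by (rule has_vector_derivative_real_field)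
  next
    have "(\<lambda>n. exp (-(Re s) * real n)) \<longlonglongrightarrow> 0" using s by real_asymp
    then have "(\<lambda>n. exp (-(Re s) * real n) / norm s) \<longlonglongrightarrow> 0"
      by (rule tendsto_divide_zero)
    moreover have "(\<lambda>n. norm (- exp (-(s * of_real (real n))) / s)) = (\<lambda>n. exp (-(Re s) * real n) / norm s)"
      by (simp add: norm_divide)
    ultimately have "(\<lambda>n. norm (- exp (-(s * of_real (real n))) / s)) \<longlonglongrightarrow> 0" by simp
    then show "(\<lambda>n. - exp (-(s * of_real (real n))) / s) \<longlonglongrightarrow> 0"
      by (subst (asm) tendsto_norm_zero_iff)
  next
    show "(\<lambda>x. exp (-(Re s) * x)) integrable_on {0..}"
      using s by (rule integrable_on_exp_minus_to_infinity)
  next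
    fix x :: real show "norm (exp (-(s * of_real x))) \<le> exp (-(Re s) * x)" by simp
  qed
  then show ?thesis using s by (simp add: field_simps)
qed

lemma poly2_integral:
  fixes l :: real assumes l: "l > 0"
  shows "((\<lambda>x::real. x^2 * exp (-l*x)) has_integral 2/l^3) {0<..}"
proof -
  define F where "F = (\<lambda>y::real. - exp (-l*y) * (y^2/l + 2*y/l^2 + 2/l^3))"
  have der: "(F has_real_derivative (y^2 * exp (-l*y))) (at y)" for y
    unfolding F_def using l
    by (auto intro!: derivative_eq_intros simp: field_simps power2_eq_square eval_nat_numeral)
  have int: "((\<lambda>x. x^2 * exp (-l*x)) has_integral (F y - F 0)) {0..y}" if "y \<ge> 0" for y
  proof (rule fundamental_theorem_of_calculus)
    fix x assume "x \<in> {0..y}"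
    show "(F has_vector_derivative (x^2 * exp (-l*x))) (at x within {0..y})"
      using der[of x] by (simp add: has_real_derivative_iff_has_vector_derivative has_vector_derivative_at_within)
  qed (use that in auto)
  have "((\<lambda>x. x^2 * exp (-l*x)) has_integral (0 - F 0)) {0..}"
  proof (rule has_integral_to_inf)
    show "(\<lambda>x. x^2 * exp (-l*x)) integrable_on {0..y}" for y
      by (intro integrable_continuous_interval continuous_intros)
    have "\<forall>\<^sub>F y in at_top. integral {0..y} (\<lambda>x. x^2 * exp (-l*x)) = F y - F 0"
      using eventually_ge_at_top[of "0::real"] by eventually_elim (use int in \<open>simp add: integral_unique\<close>)
    moreover have "((\<lambda>y. F y - F 0) \<longlongrightarrow> 0 - F 0) at_top"
      unfolding F_def using l by real_asymp
    ultimately show "((\<lambda>y. integral {0..y} (\<lambda>x. x^2 * exp (-l*x))) \<longlongrightarrow> 0 - F 0) at_top"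
      by (simp add: filterlim_cong)
  qed auto
  moreover have "negligible {x \<in> {0..} - {0<..}. x^2 * exp (-l*x) \<noteq> 0}"
    by (rule negligible_subset[of "{0}"]) auto
  moreover have "negligible {x \<in> {0<..} - {0..}. x^2 * exp (-l*x) \<noteq> (0::real)}"
    by (rule negligible_subset[of "{}"]) auto
  ultimately have "((\<lambda>x. x^2 * exp (-l*x)) has_integral (0 - F 0)) {0<..}"
    using has_integral_spike_set_eq[of "{0..}" "{0<..}" "\<lambda>x. x^2 * exp (-l*x)"] by blast
  then show ?thesis using l by (simp add: F_def)
qed

lemma powr_ratio_bound:
  fixes n :: nat and s :: real assumes n: "n \<ge> 1"
  shows "real n powr s / (real n + 1) \<le> 2 * 3 powr \<bar>s\<bar> * (real n + 2) powr (s - 1)"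
proof -
  define t where "t = real n / (real n + 2)"
  have t: "1/3 \<le> t" "t \<le> 1" "t > 0" using n by (auto simp: t_def field_simps)
  have tb: "t powr s \<le> 3 powr \<bar>s\<bar>"
  proof (cases "s \<ge> 0")
    case True
    then have "t powr s \<le> 1 powr s" using t by (intro powr_mono2) auto
    also have "\<dots> \<le> 3 powr \<bar>s\<bar>" by (simp add: ge_one_powr_ge_zero)
    finally show ?thesis .
  next
    case False
    have "t powr s = (1/t) powr (-s)" using t by (simp add: powr_divide powr_minus_divide)
    also have "\<dots> \<le> 3 powr (-s)" using False t by (intro powr_mono2) (auto simp: field_simps)
    finally show ?thesis using False by simp
  qed
  have eq: "real n powr s = t powr s * (real n + 2) powr s"
    unfolding t_def by (simp add: powr_divide)
  have eq2: "(real n + 2) powr (s - 1) = (real n + 2) powr s / (real n + 2)"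
    by (simp add: powr_diff)
  have "real n powr s / (real n + 1) \<le> 3 powr \<bar>s\<bar> * (real n + 2) powr s / (real n + 1)"
    unfolding eq by (intro divide_right_mono mult_right_mono tb) auto
  also have "\<dots> \<le> 3 powr \<bar>s\<bar> * (real n + 2) powr s * (2 / (real n + 2))"
    by (simp add: field_simps)
  also have "\<dots> = 2 * 3 powr \<bar>s\<bar> * (real n + 2) powr (s - 1)"
    unfolding eq2 by simp
  finally show ?thesis .
qed

lemma gchoose_bound:
  fixes w :: complex
  shows "\<exists>C. \<forall>k. norm (w gchoose k) \<le> C * (real k + 1) powr (-Re w - 1)"
proof -
  define z where "z = -w"
  have "convergent (rGamma_series z)" using rGamma_series_LIMSEQ by (auto simp: convergent_def)
  then have "Bseq (rGamma_series z)" by (rule convergent_imp_Bseq)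
  then obtain K where K: "K > 0" "\<And>n. norm (rGamma_series z n) \<le> K" by (auto simp: Bseq_def)
  define s where "s = Re z"
  have main: "norm (w gchoose (Suc n)) \<le> 2 * 3 powr \<bar>s\<bar> * K * (real (Suc n) + 1) powr (-Re w - 1)"
    if n: "n \<ge> 1" for n
  proof -
    have ne: "exp (z * of_real (ln (real n))) \<noteq> 0" by simp
    have nexp: "exp (Re z * ln (real n)) = real n powr s"
      using n by (simp add: s_def powr_def)
    have "pochhammer z (n+1) = rGamma_series z n * (fact n * exp (z * of_real (ln (real n))))"
      unfolding rGamma_series_def using ne by (simp add: field_simps)
    then have "norm (pochhammer z (n+1)) = norm (rGamma_series z n) * (fact n * real n powr s)"
      by (simp add: norm_mult nexp norm_fact)
    also have "\<dots> \<le> K * (fact n * real n powr s)"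
      by (intro mult_right_mono K(2)) auto
    finally have P: "norm (pochhammer z (n+1)) \<le> K * (fact n * real n powr s)" .
    have X: "norm (w gchoose (Suc n)) = norm (pochhammer z (n+1)) / fact (n+1)"
      by (simp add: gbinomial_pochhammer z_def norm_divide norm_mult norm_power norm_fact del: fact_Suc)
    have "norm (w gchoose (Suc n)) \<le> K * (fact n * real n powr s) / fact (n+1)"
      unfolding X by (intro divide_right_mono P) auto
    also have "\<dots> = K * (real n powr s / (real n + 1))"
    proof -
      have f: "(fact (n+1) :: real) = fact n * (real n + 1)" by (simp add: algebra_simps)
      have "(fact n * real n powr s) / (fact n * (real n + 1)) = real n powr s / (real n + 1)"
        by (rule mult_divide_mult_cancel_left) simp
      then show ?thesis unfolding f by (metis times_divide_eq_right)
    qed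
    also have "\<dots> \<le> K * (2 * 3 powr \<bar>s\<bar> * (real n + 2) powr (s - 1))"
      using K by (intro mult_left_mono powr_ratio_bound n) auto
    finally show ?thesis by (simp add: s_def z_def algebra_simps)
  qed
  define C where "C = max (2 * 3 powr \<bar>s\<bar> * K) (max (norm (w gchoose 0)) (norm (w gchoose 1) / 2 powr (-Re w - 1)))"
  have "norm (w gchoose k) \<le> C * (real k + 1) powr (-Re w - 1)" for k
  proof (cases "k \<ge> 2")
    case True
    then obtain n where k: "k = Suc n" "n \<ge> 1" by (cases k) auto
    have "norm (w gchoose k) \<le> 2 * 3 powr \<bar>s\<bar> * K * (real k + 1) powr (-Re w - 1)"
      using main[OF k(2)] k by simp
    also have "\<dots> \<le> C * (real k + 1) powr (-Re w - 1)"
      by (intro mult_right_mono) (auto simp: C_def)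
    finally show ?thesis .
  next
    case False
    then consider "k = 0" | "k = 1" by linarith
    then show ?thesis
    proof cases
      case 1 then show ?thesis by (simp add: C_def)
    next
      case 2
      have "norm (w gchoose 1) = (norm (w gchoose 1) / 2 powr (-Re w - 1)) * 2 powr (-Re w - 1)"
        by simp
      also have "\<dots> \<le> C * 2 powr (-Re w - 1)"
        by (intro mult_right_mono) (auto simp: C_def)
      finally show ?thesis using 2 by simp
    qed
  qed
  then show ?thesis by blast
qed

lemma one_plus_exp_lb:
  fixes c :: complex assumes c: "Re c > 0"
  shows "\<exists>\<delta>>0. \<forall>t::real. t > 0 \<longrightarrow> norm (1 + exp (-2 * (c * of_real t))) \<ge> \<delta>"
proof -
  define \<gamma> where "\<gamma> = Re c"
  define \<beta> where "\<beta> = Im c"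
  define \<delta> where "\<delta> = 1 - exp (-\<gamma> * pi / (2 * (\<bar>\<beta>\<bar> + 1)))"
  have "\<delta> > 0" using c pi_gt_zero unfolding \<delta>_def \<gamma>_def
    by (simp add: divide_pos_pos mult_pos_pos add_pos_nonneg)
  moreover have "norm (1 + exp (-2 * (c * of_real t))) \<ge> \<delta>" if t: "t > 0" for t :: real
  proof -
    define z where "z = -2 * (c * of_real t)"
    have Rez: "Re z = -2 * \<gamma> * t" and Imz: "Im z = -2 * \<beta> * t"
      by (simp_all add: z_def \<gamma>_def \<beta>_def)
    have d1: "\<delta> \<le> 1" unfolding \<delta>_def by simp
    show ?thesis
    proof (cases "cos (Im z) \<ge> 0")
      case True
      have "1 \<le> Re (1 + exp z)" using True by (simp add: Re_exp)
      also have "\<dots> \<le> norm (1 + exp z)" by (rule complex_Re_le_cmod)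
      finally show ?thesis using d1 by (simp add: z_def)
    next
      case False
      have "\<bar>Im z\<bar> \<ge> pi / 2"
      proof (rule ccontr)
        assume "\<not> ?thesis"
        then have "cos (Im z) > 0" by (intro cos_gt_zero_pi) auto
        with False show False by simp
      qed
      then have "\<bar>\<beta>\<bar> * t \<ge> pi / 4" using t by (simp add: Imz abs_mult)
      then have "(\<bar>\<beta>\<bar> + 1) * t \<ge> pi / 4" using t by (simp add: algebra_simps)
      then have tt: "t \<ge> pi / (4 * (\<bar>\<beta>\<bar> + 1))"
        by (simp add: field_simps)
      have "norm (exp z) = exp (-2 * \<gamma> * t)" by (simp add: Rez)
      also have "\<dots> \<le> exp (-\<gamma> * pi / (2 * (\<bar>\<beta>\<bar> + 1)))"
      proof -
        have "2 * \<gamma> * (pi / (4 * (\<bar>\<beta>\<bar> + 1))) \<le> 2 * \<gamma> * t"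
          using tt c by (intro mult_left_mono) (auto simp: \<gamma>_def)
        then show ?thesis by (simp add: field_simps)
      qed
      finally have "norm (exp z) \<le> 1 - \<delta>" by (simp add: \<delta>_def)
      moreover have "1 - norm (exp z) \<le> norm (1 + exp z)"
        using norm_triangle_ineq2[of 1 "- exp z"] by simp
      ultimately show ?thesis by (simp add: z_def)
    qed
  qed
  ultimately show ?thesis by blast
qed

lemma sinh_prod_exp:
  fixes a b u :: complex and x :: real
  shows "sinh (a * of_real x) * sinh (b * of_real x) * exp (-(u * of_real x)) =
     (exp (-((u - (a+b)) * of_real x)) - exp (-((u - (a-b)) * of_real x))
      - exp (-((u + (a-b)) * of_real x)) + exp (-((u + (a+b)) * of_real x))) / 4"
proof -
  define X where "X = (of_real x :: complex)"
  have e1: "exp (-((u - (a+b)) * X)) = exp (a*X) * exp (b*X) * exp (-(u*X))"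
    by (simp add: exp_add[symmetric] algebra_simps)
  have e2: "exp (-((u - (a-b)) * X)) = exp (a*X) * exp (-(b*X)) * exp (-(u*X))"
    by (simp add: exp_add[symmetric] algebra_simps)
  have e3: "exp (-((u + (a-b)) * X)) = exp (-(a*X)) * exp (b*X) * exp (-(u*X))"
    by (simp add: exp_add[symmetric] algebra_simps)
  have e4: "exp (-((u + (a+b)) * X)) = exp (-(a*X)) * exp (-(b*X)) * exp (-(u*X))"
    by (simp add: exp_add[symmetric] algebra_simps)
  show ?thesis unfolding X_def[symmetric] e1 e2 e3 e4
    by (simp add: sinh_def scaleR_conv_of_real field_simps)
qed

lemma sinh_prod_integral:
  fixes a b u :: complex
  assumes "Re (u - (a+b)) > 0" "Re (u - (a-b)) > 0" "Re (u + (a-b)) > 0" "Re (u + (a+b)) > 0"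
  shows "((\<lambda>x::real. sinh (a * of_real x) * sinh (b * of_real x) * exp (-(u * of_real x)))
     has_integral ((1/(u - (a+b)) - 1/(u - (a-b)) - 1/(u + (a-b)) + 1/(u + (a+b))) / 4)) {0<..}"
  unfolding sinh_prod_exp
  by (intro has_integral_divide has_integral_add has_integral_diff exp_integral assms)

lemma gchoose_lam_bound:
  fixes w :: complex and \<alpha> \<gamma> :: real
  assumes al: "\<alpha> > 0" and ga: "\<gamma> > 0"
  shows "\<exists>D. \<forall>k. norm (w gchoose k) * (2 / (\<alpha> + 2*\<gamma>*real k)^3) \<le> D * (real k + 1) powr (-Re w - 4)"
proof -
  obtain C where C: "\<And>k. norm (w gchoose k) \<le> C * (real k + 1) powr (-Re w - 1)"
    using gchoose_bound[of w] by blast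
  define \<mu> where "\<mu> = min \<alpha> (2*\<gamma>)"
  have mu: "\<mu> > 0" using al ga by (simp add: \<mu>_def)
  have "norm (w gchoose k) * (2 / (\<alpha> + 2*\<gamma>*real k)^3) \<le> (2 * C / \<mu>^3) * (real k + 1) powr (-Re w - 4)" for k
  proof -
    have lk: "\<mu> * (real k + 1) \<le> \<alpha> + 2*\<gamma>*real k"
    proof -
      have "\<mu> * real k \<le> 2*\<gamma>*real k" by (intro mult_right_mono) (auto simp: \<mu>_def)
      moreover have "\<mu> \<le> \<alpha>" by (simp add: \<mu>_def)
      ultimately show ?thesis by (simp add: algebra_simps)
    qed
    have pos: "0 < \<mu> * (real k + 1)" using mu by simp
    have "2 / (\<alpha> + 2*\<gamma>*real k)^3 \<le> 2 / (\<mu> * (real k + 1))^3"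
      using lk pos by (intro divide_left_mono power_mono mult_pos_pos) auto
    moreover have "0 \<le> 2 / (\<alpha> + 2*\<gamma>*real k)^3" using pos lk by simp
    ultimately have "norm (w gchoose k) * (2 / (\<alpha> + 2*\<gamma>*real k)^3) \<le>
        (C * (real k + 1) powr (-Re w - 1)) * (2 / (\<mu> * (real k + 1))^3)"
      using C[of k] order_trans[OF norm_ge_zero C[of k]] by (intro mult_mono) auto
    also have "\<dots> = (2 * C / \<mu>^3) * ((real k + 1) powr (-Re w - 1) / (real k + 1)^3)"
      by (simp only: power_mult_distrib) (simp add: field_simps)
    also have "(real k + 1) powr (-Re w - 1) / (real k + 1)^3 = (real k + 1) powr (-Re w - 4)"
    proof -
      have "(real k + 1) powr (-Re w - 4) = (real k + 1) powr (-Re w - 1) / (real k + 1) powr 3"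
      proof -
        have e: "-Re w - 4 = (-Re w - 1) - 3" by simp
        show ?thesis by (subst e) (rule powr_diff)
      qed
      also have "(real k + 1) powr 3 = (real k + 1)^3"
        using powr_realpow[of "real k + 1" 3] by simp
      finally show ?thesis by simp
    qed
    finally show ?thesis .
  qed
  then show ?thesis by blast
qed

lemma summable_gchoose_lam:
  fixes w :: complex and \<alpha> \<gamma> :: real
  assumes al: "\<alpha> > 0" and ga: "\<gamma> > 0" and w: "Re w > -3"
  shows "summable (\<lambda>k. norm (w gchoose k) * (2 / (\<alpha> + 2*\<gamma>*real k)^3))"
proof -
  obtain D where D: "\<And>k. norm (w gchoose k) * (2 / (\<alpha> + 2*\<gamma>*real k)^3) \<le> D * (real k + 1) powr (-Re w - 4)"
    using gchoose_lam_bound[OF al ga, of w] by blast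
  have "summable (\<lambda>n. real n powr (-Re w - 4))" using w by (subst summable_real_powr_iff) simp
  then have "summable (\<lambda>n. real (Suc n) powr (-Re w - 4))" by (subst summable_Suc_iff)
  then have s: "summable (\<lambda>n. D * (real n + 1) powr (-Re w - 4))"
    by (intro summable_mult) (simp add: add.commute)
  show ?thesis
  proof (rule summable_comparison_test'[OF s])
    fix n :: nat
    have "0 \<le> norm (w gchoose n) * (2 / (\<alpha> + 2*\<gamma>*real n)^3)" using al ga by simp
    then show "norm (norm (w gchoose n) * (2 / (\<alpha> + 2*\<gamma>*real n)^3)) \<le> D * (real n + 1) powr (-Re w - 4)"
      using D[of n] by simp
  qed
qed

lemma lim_gchoose_lam:
  fixes w :: complex and \<alpha> \<gamma> :: real
  assumes al: "\<alpha> > 0" and ga: "\<gamma> > 0" and w: "Re w > -4"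
  shows "(\<lambda>N. norm (w gchoose N) * (2 / (\<alpha> + 2*\<gamma>*real (Suc N))^3)) \<longlonglongrightarrow> 0"
proof -
  obtain D where D: "\<And>k. norm (w gchoose k) * (2 / (\<alpha> + 2*\<gamma>*real k)^3) \<le> D * (real k + 1) powr (-Re w - 4)"
    using gchoose_lam_bound[OF al ga, of w] by blast
  have le: "norm (w gchoose N) * (2 / (\<alpha> + 2*\<gamma>*real (Suc N))^3) \<le> norm (w gchoose N) * (2 / (\<alpha> + 2*\<gamma>*real N)^3)" for N
  proof -
    have p1: "0 < \<alpha> + 2*\<gamma>*real N" "0 < \<alpha> + 2*\<gamma>*real (Suc N)" using al ga by (auto intro: add_pos_nonneg)
    show ?thesis using p1 ga by (intro mult_left_mono divide_left_mono power_mono) (auto intro!: mult_pos_pos)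
  qed
  have ev: "\<forall>\<^sub>F N in sequentially. norm (norm (w gchoose N) * (2 / (\<alpha> + 2*\<gamma>*real (Suc N))^3)) \<le> D * (real N + 1) powr (-Re w - 4)"
  proof (intro always_eventually allI)
    fix N
    have "0 \<le> norm (w gchoose N) * (2 / (\<alpha> + 2*\<gamma>*real (Suc N))^3)" using al ga by simp
    then show "norm (norm (w gchoose N) * (2 / (\<alpha> + 2*\<gamma>*real (Suc N))^3)) \<le> D * (real N + 1) powr (-Re w - 4)"
      using le[of N] D[of N] by simp
  qed
  have "(\<lambda>N. (real N + 1) powr (-Re w - 4)) \<longlonglongrightarrow> 0"
  proof (rule tendsto_neg_powr)
    show "- Re w - 4 < 0" using w by simp
    show "filterlim (\<lambda>N. real N + 1) at_top sequentially" by real_asymp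
  qed
  then have "(\<lambda>N. D * (real N + 1) powr (-Re w - 4)) \<longlonglongrightarrow> 0"
    using tendsto_mult_right_zero by blast
  then show ?thesis by (rule Lim_null_comparison[OF ev])
qed

lemma pascal_sum:
  fixes v q :: complex
  shows "(1 + q) * (\<Sum>k<Suc N. ((-v) gchoose k) * q^k) =
         (\<Sum>k<Suc N. ((-v + 1) gchoose k) * q^k) + ((-v) gchoose N) * q^Suc N"
proof (induction N)
  case 0 then show ?case by (simp add: algebra_simps)
next
  case (Suc N)
  have p: "(1 - v) gchoose Suc N = ((-v) gchoose N) + ((-v) gchoose Suc N)"
    using gbinomial_Suc_Suc[of "-v" N] by simp
  have "(1 + q) * (\<Sum>k<Suc (Suc N). ((-v) gchoose k) * q^k) =
        (1 + q) * (\<Sum>k<Suc N. ((-v) gchoose k) * q^k) + (1 + q) * (((-v) gchoose Suc N) * q^Suc N)"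
    by (simp add: algebra_simps)
  also have "\<dots> = (\<Sum>k<Suc N. ((-v + 1) gchoose k) * q^k) + ((-v) gchoose N) * q^Suc N + (1 + q) * (((-v) gchoose Suc N) * q^Suc N)"
    using Suc.IH by simp
  also have "\<dots> = (\<Sum>k<Suc (Suc N). ((-v + 1) gchoose k) * q^k) + ((-v) gchoose Suc N) * q^Suc (Suc N)"
    by (simp add: p algebra_simps)
  finally show ?case .
qed

lemma complex_powr_one: "(z::complex) \<noteq> 0 \<Longrightarrow> z powr 1 = z"
  by (simp add: powr_def)

lemma poly2_integral':
  fixes l :: real assumes l: "l > 0"
  shows "((\<lambda>x::real. x^2 * exp (-(l*x))) has_integral 2/l^3) {0<..}"
  using poly2_integral[OF l] by simp

lemma main_sum:
  fixes v a b c :: complex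
  assumes v4: "Re v < 4" and c: "Re c > 0"
    and h1: "Re (v * c + a + b) > 0" and h2: "Re (v * c + a - b) > 0"
    and h3: "Re (v * c - a + b) > 0" and h4: "Re (v * c - a - b) > 0"
  shows "\<exists>I. (\<lambda>k. 2 powr v * ((-v) gchoose k) *
             ((1/((v + 2 * of_nat k) * c - (a+b)) - 1/((v + 2 * of_nat k) * c - (a-b))
               - 1/((v + 2 * of_nat k) * c + (a-b)) + 1/((v + 2 * of_nat k) * c + (a+b))) / 4)) sums I
          \<and> ((\<lambda>x::real. sinh (a * of_real x) * sinh (b * of_real x) / cosh_pow v (c * of_real x))
              has_integral I) {0<..}"
proof -
  define K where "K = (2::complex) powr v"
  define u where "u k = (v + 2 * of_nat k) * c" for k :: nat
  define J where "J k = (1/(u k - (a+b)) - 1/(u k - (a-b)) - 1/(u k + (a-b)) + 1/(u k + (a+b))) / 4" for k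
  define q where "q x = exp (-2 * (c * of_real x))" for x :: real
  define h where "h x = sinh (a * of_real x) * sinh (b * of_real x) * exp (-(v * (c * of_real x)))" for x :: real
  define g where "g k x = sinh (a * of_real x) * sinh (b * of_real x) * exp (-(u k * of_real x))" for k and x :: real
  define bb where "bb k = (-v) gchoose k" for k
  define bp where "bp k = (-v + 1) gchoose k" for k
  define F where "F x = K * h x * (1 + q x) powr (-v)" for x
  define A where "A N x = K * (h x / (1 + q x)) * (\<Sum>k<N. bp k * q x ^ k)" for N x
  define B where "B N x = K * (h x / (1 + q x)) * (bb N * q x ^ Suc N)" for N x
  define \<alpha> where "\<alpha> = Re (v * c) - \<bar>Re a\<bar> - \<bar>Re b\<bar>"
  define \<gamma> where "\<gamma> = Re c"
  define lam where "lam k = \<alpha> + 2 * \<gamma> * real k" for k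
  have ga: "\<gamma> > 0" using c by (simp add: \<gamma>_def)
  have al: "\<alpha> > 0"
    using h1 h2 h3 h4 unfolding \<alpha>_def by (simp add: abs_if split: if_splits)
  have lam_pos: "lam k > 0" for k using al ga by (simp add: lam_def add_pos_nonneg)
  obtain \<delta> where dpos: "\<delta> > 0" and dlb: "\<And>t::real. t > 0 \<Longrightarrow> norm (1 + q t) \<ge> \<delta>"
    using one_plus_exp_lb[OF c] unfolding q_def by blast
  have qne: "1 + q x \<noteq> 0" if "x > 0" for x using dlb[OF that] dpos by auto
  have normq: "norm (q x) = exp (-2 * \<gamma> * x)" for x by (simp add: q_def \<gamma>_def)
  have qlt: "norm (q x) < 1" if "x > 0" for x using that ga by (simp add: normq)
  have uk: "u k = v * c + of_real (2 * real k) * c" for k by (simp add: u_def algebra_simps)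
  have Jint: "(g k has_integral J k) {0<..}" for k
  proof -
    have r: "Re (u k - (a+b)) = Re (v * c - a - b) + 2 * real k * Re c"
            "Re (u k - (a-b)) = Re (v * c - a + b) + 2 * real k * Re c"
            "Re (u k + (a-b)) = Re (v * c + a - b) + 2 * real k * Re c"
            "Re (u k + (a+b)) = Re (v * c + a + b) + 2 * real k * Re c"
      by (simp_all add: uk)
    have p: "0 \<le> 2 * real k * Re c" using c by simp
    show ?thesis unfolding g_def J_def
      by (rule sinh_prod_integral) (use h1 h2 h3 h4 p in \<open>simp_all only: r\<close>)
  qed
  have gq: "g k x = h x * q x ^ k" for k x
  proof -
    have "exp (-2 * (c * of_real x)) ^ k = exp (of_nat k * (-2 * (c * of_real x)))"
      by (rule exp_of_nat_mult[symmetric])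
    moreover have "exp (-(v * (c * of_real x))) * exp (of_nat k * (-2 * (c * of_real x))) = exp (-(u k * of_real x))"
      by (simp add: exp_add[symmetric] u_def algebra_simps)
    ultimately show ?thesis by (simp add: g_def h_def q_def mult.assoc)
  qed
  have Fsum: "((\<lambda>x. K * (\<Sum>k<N. bb k * g k x)) has_integral (K * (\<Sum>k<N. bb k * J k))) {0<..}" for N
    by (intro has_integral_mult_right has_integral_sum) (auto intro: has_integral_mult_right Jint)
  have ID: "K * (\<Sum>k<Suc N. bb k * g k x) = A (Suc N) x + B N x" if "x > 0" for N x
  proof -
    have "(\<Sum>k<Suc N. bb k * g k x) = h x * (\<Sum>k<Suc N. bb k * q x^k)"
      by (simp add: gq sum_distrib_left algebra_simps)
    also have "\<dots> = (h x / (1 + q x)) * ((1 + q x) * (\<Sum>k<Suc N. bb k * q x^k))"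
      using qne[OF that] by simp
    also have "(1 + q x) * (\<Sum>k<Suc N. bb k * q x^k) = (\<Sum>k<Suc N. bp k * q x^k) + bb N * q x ^ Suc N"
      unfolding bb_def bp_def by (rule pascal_sum)
    finally show ?thesis by (simp add: A_def B_def algebra_simps)
  qed
  have hb: "norm (h x) * norm (q x) ^ k \<le> norm a * norm b * (x^2 * exp (- lam k * x))" if x: "x > 0" for x k
  proof -
    have sa: "norm (sinh (a * of_real x)) \<le> norm a * x * exp (\<bar>Re a\<bar> * x)"
      using norm_sinh_le[of "a * of_real x"] x by (simp add: norm_mult abs_mult)
    have sb: "norm (sinh (b * of_real x)) \<le> norm b * x * exp (\<bar>Re b\<bar> * x)"
      using norm_sinh_le[of "b * of_real x"] x by (simp add: norm_mult abs_mult)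
    have ev: "norm (exp (-(v * (c * of_real x)))) = exp (- (Re (v * c) * x))"
    proof -
      have "v * (c * of_real x) = (v * c) * of_real x" by simp
      then show ?thesis by (simp only:) simp
    qed
    have "norm (h x) \<le> (norm a * x * exp (\<bar>Re a\<bar> * x)) * (norm b * x * exp (\<bar>Re b\<bar> * x)) * exp (- (Re (v * c) * x))"
      unfolding h_def norm_mult ev
      using x by (intro mult_right_mono mult_mono sa sb) auto
    also have "\<dots> = norm a * norm b * (x^2 * (exp (\<bar>Re a\<bar> * x) * exp (\<bar>Re b\<bar> * x) * exp (- (Re (v * c) * x))))"
      by (simp add: power2_eq_square algebra_simps)
    also have "exp (\<bar>Re a\<bar> * x) * exp (\<bar>Re b\<bar> * x) * exp (- (Re (v * c) * x)) = exp (-\<alpha> * x)"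
      unfolding mult_exp_exp by (simp add: \<alpha>_def algebra_simps)
    finally have hx: "norm (h x) \<le> norm a * norm b * (x^2 * exp (-\<alpha> * x))" .
    have qk: "norm (q x) ^ k = exp (- (2 * \<gamma> * real k) * x)"
      unfolding normq exp_of_nat_mult[symmetric] by (simp add: algebra_simps)
    have "norm (h x) * norm (q x) ^ k \<le> norm a * norm b * (x^2 * exp (-\<alpha> * x)) * exp (- (2 * \<gamma> * real k) * x)"
      unfolding qk by (intro mult_right_mono hx) auto
    also have "\<dots> = norm a * norm b * (x^2 * (exp (-\<alpha> * x) * exp (- (2 * \<gamma> * real k) * x)))"
      by (simp add: algebra_simps)
    also have "exp (-\<alpha> * x) * exp (- (2 * \<gamma> * real k) * x) = exp (- lam k * x)"
      unfolding mult_exp_exp by (simp add: lam_def algebra_simps)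
    finally show ?thesis .
  qed
  define M where "M = norm K / \<delta> * (norm a * norm b)"
  define H where "H x = M * (\<Sum>k. norm (bp k) * (x^2 * exp (- lam k * x)))" for x :: real
  have Mnn: "M \<ge> 0" using dpos by (simp add: M_def)
  have expk: "x^2 * exp (-\<alpha> * x) * exp (-2 * \<gamma> * x) ^ k = x^2 * exp (- lam k * x)" for x k
  proof -
    have "exp (-2 * \<gamma> * x) ^ k = exp (of_nat k * (-2 * \<gamma> * x))" by (rule exp_of_nat_mult[symmetric])
    moreover have "exp (-\<alpha> * x) * exp (of_nat k * (-2 * \<gamma> * x)) = exp (- lam k * x)"
      unfolding mult_exp_exp by (simp add: lam_def algebra_simps)
    ultimately show ?thesis by (simp add: mult.assoc)
  qed
  have Hsum: "summable (\<lambda>k. norm (bp k) * (x^2 * exp (- lam k * x)))" if x: "x > 0" for x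
  proof -
    have cr: "ereal (norm (complex_of_real (exp (-2 * \<gamma> * x)))) < conv_radius bp"
    proof -
      have "exp (-2 * \<gamma> * x) < 1" using x ga by simp
      moreover have "conv_radius bp = (if (-v+1) \<in> \<nat> then \<infinity> else 1)"
        unfolding bp_def[abs_def] by (rule conv_radius_gchoose)
      ultimately show ?thesis by auto
    qed
    have "summable (\<lambda>k. norm (bp k * complex_of_real (exp (-2 * \<gamma> * x)) ^ k))"
      by (rule abs_summable_in_conv_radius[OF cr])
    then have "summable (\<lambda>k. norm (bp k * complex_of_real (exp (-2 * \<gamma> * x)) ^ k) * (x^2 * exp (-\<alpha> * x)))"
      by (rule summable_mult2)
    moreover have "(\<lambda>k. norm (bp k * complex_of_real (exp (-2 * \<gamma> * x)) ^ k) * (x^2 * exp (-\<alpha> * x))) =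
        (\<lambda>k. norm (bp k) * (x^2 * exp (- lam k * x)))"
    proof (rule ext)
      fix k
      show "norm (bp k * complex_of_real (exp (-2 * \<gamma> * x)) ^ k) * (x^2 * exp (-\<alpha> * x)) =
        norm (bp k) * (x^2 * exp (- lam k * x))"
        using expk[of x k] by (simp add: norm_mult norm_power algebra_simps)
    qed
    ultimately show ?thesis by (simp only:)
  qed
  define Hn where "Hn N x = M * (\<Sum>k<N. norm (bp k) * (x^2 * exp (- lam k * x)))" for N x
  have Hnint: "(Hn N has_integral (M * (\<Sum>k<N. norm (bp k) * (2 / lam k ^ 3)))) {0<..}" for N
    unfolding Hn_def
    by (intro has_integral_mult_right has_integral_sum) (auto intro!: has_integral_mult_right poly2_integral' lam_pos)
  have Ssum: "summable (\<lambda>k. norm (bp k) * (2 / lam k ^ 3))"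
    unfolding lam_def bp_def using summable_gchoose_lam[OF al ga, of "-v+1"] v4 by simp
  have Hint: "H integrable_on {0<..}"
  proof -
    have "H integrable_on {0<..} \<and> (\<lambda>N. integral {0<..} (Hn N)) \<longlonglongrightarrow> integral {0<..} H"
    proof (rule monotone_convergence_increasing)
      show "Hn N integrable_on {0<..}" for N using Hnint by blast
      show "Hn N x \<le> Hn (Suc N) x" if "x \<in> {0<..}" for N x
        using Mnn unfolding Hn_def by (intro mult_left_mono) auto
      show "(\<lambda>N. Hn N x) \<longlonglongrightarrow> H x" if "x \<in> {0<..}" for x
        unfolding Hn_def H_def using Hsum[of x] that
        by (intro tendsto_mult_left) (auto simp: summable_LIMSEQ)
      show "bounded (range (\<lambda>N. integral {0<..} (Hn N)))"
      proof (rule boundedI)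
        fix y assume "y \<in> range (\<lambda>N. integral {0<..} (Hn N))"
        then obtain N where y: "y = M * (\<Sum>k<N. norm (bp k) * (2 / lam k ^ 3))"
          using Hnint integral_unique by blast
        have nn: "0 \<le> norm (bp k) * (2 / lam k ^ 3)" for k
          by (intro mult_nonneg_nonneg divide_nonneg_pos zero_less_power lam_pos) auto
        have "0 \<le> (\<Sum>k<N. norm (bp k) * (2 / lam k ^ 3))"
          by (intro sum_nonneg nn)
        moreover have "(\<Sum>k<N. norm (bp k) * (2 / lam k ^ 3)) \<le> (\<Sum>k. norm (bp k) * (2 / lam k ^ 3))"
          by (intro sum_le_suminf Ssum nn) auto
        ultimately show "norm y \<le> M * (\<Sum>k. norm (bp k) * (2 / lam k ^ 3))"
          using Mnn unfolding y by (simp add: abs_mult mult_left_mono)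
      qed
    qed
    then show ?thesis by blast
  qed
  have Abnd: "norm (A N x) \<le> H x" if "x \<in> {0<..}" for N x
  proof -
    have x: "x > 0" using that by simp
    have "norm (A N x) = norm K * (norm (h x) / norm (1 + q x)) * norm (\<Sum>k<N. bp k * q x ^ k)"
      by (simp add: A_def norm_mult norm_divide)
    also have "\<dots> \<le> norm K * (norm (h x) / \<delta>) * (\<Sum>k<N. norm (bp k) * norm (q x) ^ k)"
    proof (intro mult_mono mult_left_mono divide_left_mono)
      show "norm (\<Sum>k<N. bp k * q x ^ k) \<le> (\<Sum>k<N. norm (bp k) * norm (q x) ^ k)"
        by (rule order_trans[OF norm_sum]) (simp add: norm_mult norm_power)
    next
      have "0 < norm (1 + q x)" using dlb[OF x] dpos by linarith
      then show "0 < norm (1 + q x) * \<delta>" using dpos by simp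
    qed (use dlb[OF x] dpos in \<open>auto intro: sum_nonneg\<close>)
    also have "\<dots> = norm K / \<delta> * (\<Sum>k<N. norm (bp k) * (norm (h x) * norm (q x) ^ k))"
      by (simp add: sum_distrib_left algebra_simps)
    also have "\<dots> \<le> norm K / \<delta> * (\<Sum>k<N. norm (bp k) * (norm a * norm b * (x^2 * exp (- lam k * x))))"
      using dpos by (intro mult_left_mono sum_mono hb[OF x]) auto
    also have "\<dots> = Hn N x"
      by (simp add: Hn_def M_def sum_distrib_left algebra_simps)
    also have "\<dots> \<le> H x"
      unfolding Hn_def H_def using Mnn by (intro mult_left_mono sum_le_suminf Hsum[OF x]) auto
    finally show ?thesis .
  qed
  have Aint: "A N integrable_on {0<..}" for N
  proof (rule measurable_bounded_by_integrable_imp_integrable[OF _ Hint Abnd])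
    have "continuous_on {0<..} (A N)"
      unfolding A_def h_def q_def using qne unfolding q_def
      by (auto intro!: continuous_intros)
    then show "A N \<in> borel_measurable (lebesgue_on {0<..})"
      by (rule continuous_imp_measurable_on_sets_lebesgue) simp
  qed simp_all
  have Aconv: "(\<lambda>N. A N x) \<longlonglongrightarrow> F x" if "x \<in> {0<..}" for x
  proof -
    have x: "x > 0" using that by simp
    have "(\<lambda>n. bp n * q x ^ n) sums (1 + q x) powr (-v + 1)"
      unfolding bp_def by (rule gen_binomial_complex[OF qlt[OF x]])
    then have "(\<lambda>N. A N x) \<longlonglongrightarrow> K * (h x / (1 + q x)) * (1 + q x) powr (-v + 1)"
      unfolding A_def sums_def by (intro tendsto_mult_left)
    also have "K * (h x / (1 + q x)) * (1 + q x) powr (-v + 1) = F x"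
    proof -
      have "(1 + q x) powr (-v + 1) = (1 + q x) powr (-v) * (1 + q x)"
        by (simp only: powr_add complex_powr_one[OF qne[OF x]])
      then show ?thesis using qne[OF x] by (simp add: F_def)
    qed
    finally show ?thesis .
  qed
  note dc = dominated_convergence[of A "{0<..}" H F, OF Aint Hint Abnd Aconv]
  have Fint: "(\<lambda>x. K * (\<Sum>k<N. bb k * g k x)) integrable_on {0<..}" for N
    using Fsum by blast
  have Bint: "B N integrable_on {0<..}" for N
  proof (rule integrable_eq)
    show "(\<lambda>x. K * (\<Sum>k<Suc N. bb k * g k x) - A (Suc N) x) integrable_on {0<..}"
      by (intro integrable_diff Fint Aint)
    show "K * (\<Sum>k<Suc N. bb k * g k x) - A (Suc N) x = B N x" if "x \<in> {0<..}" for x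
      using ID[of x N] that by simp
  qed
  have Bbnd: "norm (integral {0<..} (B N)) \<le> M * (norm (bb N) * (2 / lam (Suc N) ^ 3))" for N
  proof -
    have gi: "((\<lambda>x. M * (norm (bb N) * (x^2 * exp (- lam (Suc N) * x)))) has_integral
               M * (norm (bb N) * (2 / lam (Suc N) ^ 3))) {0<..}"
      by (intro has_integral_mult_right) (auto intro!: poly2_integral' lam_pos)
    have "norm (integral {0<..} (B N)) \<le> integral {0<..} (\<lambda>x. M * (norm (bb N) * (x^2 * exp (- lam (Suc N) * x))))"
    proof (rule integral_norm_bound_integral[OF Bint])
      show "(\<lambda>x. M * (norm (bb N) * (x^2 * exp (- lam (Suc N) * x)))) integrable_on {0<..}"
        using gi by blast
      fix x :: real assume "x \<in> {0<..}"
      then have x: "x > 0" by simp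
      have "norm (B N x) = norm K * (norm (h x) / norm (1 + q x)) * (norm (bb N) * norm (q x) ^ Suc N)"
        by (simp add: B_def norm_mult norm_divide norm_power)
      also have "\<dots> \<le> norm K * (norm (h x) / \<delta>) * (norm (bb N) * norm (q x) ^ Suc N)"
      proof (intro mult_right_mono mult_left_mono divide_left_mono)
        have "0 < norm (1 + q x)" using dlb[OF x] dpos by linarith
        then show "0 < norm (1 + q x) * \<delta>" using dpos by simp
      qed (use dlb[OF x] dpos in auto)
      also have "\<dots> = norm K / \<delta> * norm (bb N) * (norm (h x) * norm (q x) ^ Suc N)"
        by (simp add: algebra_simps)
      also have "\<dots> \<le> norm K / \<delta> * norm (bb N) * (norm a * norm b * (x^2 * exp (- lam (Suc N) * x)))"
        using dpos by (intro mult_left_mono hb[OF x]) auto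
      also have "\<dots> = M * (norm (bb N) * (x^2 * exp (- lam (Suc N) * x)))"
        by (simp add: M_def algebra_simps)
      finally show "norm (B N x) \<le> M * (norm (bb N) * (x^2 * exp (- lam (Suc N) * x)))" .
    qed
    also have "\<dots> = M * (norm (bb N) * (2 / lam (Suc N) ^ 3))"
      using gi by (rule integral_unique)
    finally show ?thesis .
  qed
  have Blim: "(\<lambda>N. integral {0<..} (B N)) \<longlonglongrightarrow> 0"
  proof (rule Lim_null_comparison)
    show "\<forall>\<^sub>F N in sequentially. norm (integral {0<..} (B N)) \<le> M * (norm (bb N) * (2 / lam (Suc N) ^ 3))"
      using Bbnd by simp
    have "(\<lambda>N. norm (bb N) * (2 / lam (Suc N) ^ 3)) \<longlonglongrightarrow> 0"
      unfolding lam_def bb_def using lim_gchoose_lam[OF al ga, of "-v"] v4 by simp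
    then show "(\<lambda>N. M * (norm (bb N) * (2 / lam (Suc N) ^ 3))) \<longlonglongrightarrow> 0"
      by (rule tendsto_mult_right_zero)
  qed
  have lim: "(\<lambda>N. K * (\<Sum>k<Suc N. bb k * J k)) \<longlonglongrightarrow> integral {0<..} F"
  proof -
    have eq: "K * (\<Sum>k<Suc N. bb k * J k) = integral {0<..} (A (Suc N)) + integral {0<..} (B N)" for N
    proof -
      have "K * (\<Sum>k<Suc N. bb k * J k) = integral {0<..} (\<lambda>x. K * (\<Sum>k<Suc N. bb k * g k x))"
        using Fsum by (rule integral_unique[symmetric])
      also have "\<dots> = integral {0<..} (\<lambda>x. A (Suc N) x + B N x)"
        using ID by (intro integral_cong) auto
      also have "\<dots> = integral {0<..} (A (Suc N)) + integral {0<..} (B N)"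
        by (intro integral_add Aint Bint)
      finally show ?thesis .
    qed
    have "(\<lambda>N. integral {0<..} (A (Suc N)) + integral {0<..} (B N)) \<longlonglongrightarrow> integral {0<..} F + 0"
      by (intro tendsto_add Blim LIMSEQ_Suc dc(2))
    then show ?thesis unfolding eq by simp
  qed
  have sums: "(\<lambda>k. K * (bb k * J k)) sums integral {0<..} F"
    unfolding sums_def
    by (rule LIMSEQ_imp_Suc) (use lim in \<open>simp add: sum_distrib_left distrib_left\<close>)
  have Feq: "sinh (a * of_real x) * sinh (b * of_real x) / cosh_pow v (c * of_real x) = F x" if x: "x > 0" for x
  proof -
    have n1: "(2::complex) powr v \<noteq> 0" by (simp add: powr_def)
    have n2: "(1 + q x) powr v \<noteq> 0" using qne[OF x] by (simp add: powr_def)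
    show ?thesis
      unfolding cosh_pow_def F_def h_def K_def q_def[symmetric] powr_minus exp_minus
      using n1 n2 by (simp add: field_simps)
  qed
  have "((\<lambda>x::real. sinh (a * of_real x) * sinh (b * of_real x) / cosh_pow v (c * of_real x))
              has_integral integral {0<..} F) {0<..}"
    using has_integral_eq[of "{0<..}" F, OF _ integrable_integral[OF dc(1)]] Feq by auto
  moreover have "(\<lambda>k. 2 powr v * ((-v) gchoose k) *
             ((1/((v + 2 * of_nat k) * c - (a+b)) - 1/((v + 2 * of_nat k) * c - (a-b))
               - 1/((v + 2 * of_nat k) * c + (a-b)) + 1/((v + 2 * of_nat k) * c + (a+b))) / 4)) = (\<lambda>k. K * (bb k * J k))"
    by (simp add: K_def bb_def J_def u_def mult.assoc)
  ultimately show ?thesis using sums by auto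
qed

lemma sigma_ratio:
  fixes c n e :: complex
  assumes "c \<noteq> 0" "e + 2 * n * c \<noteq> 0"
  shows "(e / (2*c)) / (e / (2*c) + n) = e / (e + 2 * n * c)"
  using assms by (simp add: field_simps)

lemma alg_step1:
  fixes v n a b c p1 p2 p3 p4 d1 d2 d3 d4 :: complex
  assumes "v \<noteq> 0" "p1 \<noteq> 0" "p2 \<noteq> 0" "p3 \<noteq> 0" "p4 \<noteq> 0" "d1 \<noteq> 0" "d2 \<noteq> 0" "d3 \<noteq> 0" "d4 \<noteq> 0"
  shows "2 * v * a * b * c / (p1 * p2 * p3 * p4) * ((v + 2*n) / v) * (p1/d1) * (p2/d4) * (p3/d2) * (p4/d3)
         = 2 * a * b * (c * (v + 2*n)) / (d1 * d2 * d3 * d4)"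
  using assms by (simp add: field_simps)

lemma alg_step2:
  fixes U s d :: complex
  assumes "U - s \<noteq> 0" "U - d \<noteq> 0" "U + d \<noteq> 0" "U + s \<noteq> 0"
  shows "(1/(U - s) - 1/(U - d) - 1/(U + d) + 1/(U + s)) / 4 = U * (s^2 - d^2) / 2 / ((U - s) * (U + s) * (U - d) * (U + d))"
proof -
  have ps: "(U - s) * (U + s) \<noteq> 0" and pd: "(U - d) * (U + d) \<noteq> 0" using assms by auto
  have A: "1/(U - s) + 1/(U + s) = 2 * U / ((U - s) * (U + s))"
  proof -
    have "1/(U - s) + 1/(U + s) = (1 * (U + s) + 1 * (U - s)) / ((U - s) * (U + s))"
      using add_frac_eq[of "U - s" "U + s" 1 1] assms by simp
    then show ?thesis by simp
  qed
  have B: "1/(U - d) + 1/(U + d) = 2 * U / ((U - d) * (U + d))"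
  proof -
    have "1/(U - d) + 1/(U + d) = (1 * (U + d) + 1 * (U - d)) / ((U - d) * (U + d))"
      using add_frac_eq[of "U - d" "U + d" 1 1] assms by simp
    then show ?thesis by simp
  qed
  have "(1/(U - s) - 1/(U - d) - 1/(U + d) + 1/(U + s)) = (1/(U - s) + 1/(U + s)) - (1/(U - d) + 1/(U + d))"
    by (simp add: algebra_simps)
  also have "\<dots> = 2 * U / ((U - s) * (U + s)) - 2 * U / ((U - d) * (U + d))" by (simp only: A B)
  also have "\<dots> = (2 * U * ((U - d) * (U + d)) - 2 * U * ((U - s) * (U + s))) / (((U - s) * (U + s)) * ((U - d) * (U + d)))"
    by (rule diff_frac_eq[OF ps pd])
  also have "2 * U * ((U - d) * (U + d)) - 2 * U * ((U - s) * (U + s)) = 2 * (U * (s^2 - d^2))"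
    by (simp add: algebra_simps power2_eq_square)
  finally have E: "1/(U - s) - 1/(U - d) - 1/(U + d) + 1/(U + s) =
     2 * (U * (s^2 - d^2)) / (((U - s) * (U + s)) * ((U - d) * (U + d)))" .
  have D: "((U - s) * (U + s)) * ((U - d) * (U + d)) = (U - s) * (U + s) * (U - d) * (U + d)"
    by (simp only: mult_ac)
  have G: "(2 * W / D) / 4 = W / 2 / (D::complex)" for W D
    by (cases "D = 0") (simp_all add: field_simps)
  show ?thesis unfolding E D by (rule G)
qed

lemma alg_identity:
  fixes v a b c n :: complex
  assumes c: "c \<noteq> 0" and v: "v \<noteq> 0"
    and f1: "(v + 2*n) * c - (a+b) \<noteq> 0" and f2: "(v + 2*n) * c - (a-b) \<noteq> 0"
    and f3: "(v + 2*n) * c + (a-b) \<noteq> 0" and f4: "(v + 2*n) * c + (a+b) \<noteq> 0"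
    and e1: "v * c - a - b \<noteq> 0" and e2: "v * c + a + b \<noteq> 0" and e3: "v * c - a + b \<noteq> 0" and e4: "v * c + a - b \<noteq> 0"
  shows "2 * v * a * b * c / ((v * c - a - b) * (v * c + a + b) * (v * c - a + b) * (v * c + a - b))
          * ((v/2 + n) / (v/2))
          * ((v/2 - a/(2*c) - b/(2*c)) / ((v/2 - a/(2*c) - b/(2*c)) + n))
          * ((v/2 + a/(2*c) + b/(2*c)) / ((v/2 + a/(2*c) + b/(2*c)) + n))
          * ((v/2 - a/(2*c) + b/(2*c)) / ((v/2 - a/(2*c) + b/(2*c)) + n))
          * ((v/2 + a/(2*c) - b/(2*c)) / ((v/2 + a/(2*c) - b/(2*c)) + n))
        = (1/((v + 2*n) * c - (a+b)) - 1/((v + 2*n) * c - (a-b))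
               - 1/((v + 2*n) * c + (a-b)) + 1/((v + 2*n) * c + (a+b))) / 4"
proof -
  have s3: "v/2 - a/(2*c) - b/(2*c) = (v * c - a - b) / (2*c)" using c by (simp add: field_simps)
  have s5: "v/2 + a/(2*c) + b/(2*c) = (v * c + a + b) / (2*c)" using c by (simp add: field_simps)
  have s4: "v/2 - a/(2*c) + b/(2*c) = (v * c - a + b) / (2*c)" using c by (simp add: field_simps)
  have s6: "v/2 + a/(2*c) - b/(2*c) = (v * c + a - b) / (2*c)" using c by (simp add: field_simps)
  have r3: "((v * c - a - b) / (2*c)) / ((v * c - a - b) / (2*c) + n) = (v * c - a - b) / ((v + 2*n) * c - (a+b))"
    using sigma_ratio[OF c, of "v * c - a - b" n] f1 by (simp add: algebra_simps)
  have r5: "((v * c + a + b) / (2*c)) / ((v * c + a + b) / (2*c) + n) = (v * c + a + b) / ((v + 2*n) * c + (a+b))"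
    using sigma_ratio[OF c, of "v * c + a + b" n] f4 by (simp add: algebra_simps)
  have r4: "((v * c - a + b) / (2*c)) / ((v * c - a + b) / (2*c) + n) = (v * c - a + b) / ((v + 2*n) * c - (a-b))"
    using sigma_ratio[OF c, of "v * c - a + b" n] f2 by (simp add: algebra_simps)
  have r6: "((v * c + a - b) / (2*c)) / ((v * c + a - b) / (2*c) + n) = (v * c + a - b) / ((v + 2*n) * c + (a-b))"
    using sigma_ratio[OF c, of "v * c + a - b" n] f3 by (simp add: algebra_simps)
  have rv: "(v/2 + n) / (v/2) = (v + 2*n) / v" using v by (simp add: field_simps)
  have "(1/((v + 2*n) * c - (a+b)) - 1/((v + 2*n) * c - (a-b))
               - 1/((v + 2*n) * c + (a-b)) + 1/((v + 2*n) * c + (a+b))) / 4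
        = ((v + 2*n) * c) * ((a+b)^2 - (a-b)^2) / 2 / (((v + 2*n) * c - (a+b)) * ((v + 2*n) * c + (a+b)) * ((v + 2*n) * c - (a-b)) * ((v + 2*n) * c + (a-b)))"
    by (rule alg_step2[OF f1 f2 f3 f4])
  also have "((v + 2*n) * c) * ((a+b)^2 - (a-b)^2) / 2 = 2 * a * b * (c * (v + 2*n))"
    by (simp add: power2_eq_square algebra_simps)
  also have "(((v + 2*n) * c - (a+b)) * ((v + 2*n) * c + (a+b)) * ((v + 2*n) * c - (a-b)) * ((v + 2*n) * c + (a-b)))
     = (((v + 2*n) * c - (a+b)) * ((v + 2*n) * c - (a-b)) * ((v + 2*n) * c + (a-b)) * ((v + 2*n) * c + (a+b)))"
    by (simp only: mult_ac)
  finally have R: "(1/((v + 2*n) * c - (a+b)) - 1/((v + 2*n) * c - (a-b))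
               - 1/((v + 2*n) * c + (a-b)) + 1/((v + 2*n) * c + (a+b))) / 4 =
     2 * a * b * (c * (v + 2*n)) / (((v + 2*n) * c - (a+b)) * ((v + 2*n) * c - (a-b)) * ((v + 2*n) * c + (a-b)) * ((v + 2*n) * c + (a+b)))" .
  show ?thesis
    unfolding s3 s5 s4 s6 r3 r5 r4 r6 R rv
    by (rule alg_step1[OF v e1 e2 e3 e4 f1 f2 f3 f4])
qed

lemma poch_shift: "pochhammer (1 + x) n * x = pochhammer x n * (x + of_nat n)"
  for x :: complex
  using pochhammer_rec[of x n] pochhammer_rec'[of x n] by (simp add: algebra_simps)

lemma poch_nonzero: "(x::complex) \<notin> \<int>\<^sub>\<le>\<^sub>0 \<Longrightarrow> pochhammer x n \<noteq> 0"
  by (auto simp: pochhammer_eq_0_iff)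

lemma poch_ratio:
  fixes x :: complex
  assumes "1 + x \<notin> \<int>\<^sub>\<le>\<^sub>0" "x \<noteq> 0"
  shows "pochhammer x n = pochhammer (1 + x) n * (x / (x + of_nat n))"
    and "x + of_nat n \<noteq> 0"
proof -
  have q: "pochhammer (1 + x) n \<noteq> 0" using poch_nonzero[OF assms(1)] .
  have e: "pochhammer (1 + x) n * x = pochhammer x n * (x + of_nat n)" by (rule poch_shift)
  show ne: "x + of_nat n \<noteq> 0"
  proof
    assume "x + of_nat n = 0"
    then have "pochhammer (1 + x) n * x = 0" using e by simp
    then show False using q assms(2) by simp
  qed
  show "pochhammer x n = pochhammer (1 + x) n * (x / (x + of_nat n))"
    using e ne by (simp add: field_simps)
qed

lemma T_rearrange:
  fixes pv p1 p3 p5 p4 p6 q0 q3 q5 q4 q6 r0 r3 r5 r4 r6 S F :: complex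
  assumes "q0 \<noteq> 0" "q3 \<noteq> 0" "q5 \<noteq> 0" "q4 \<noteq> 0" "q6 \<noteq> 0"
    and "p1 = q0 * r0" "p3 = q3 * r3" "p5 = q5 * r5" "p4 = q4 * r4" "p6 = q6 * r6"
  shows "pv * (p1 * (p3 * (p5 * (p4 * p6)))) / (q0 * (q3 * (q5 * (q4 * q6)))) * S / F
       = (pv * S / F) * (r0 * r3 * r5 * r4 * r6)"
  using assms by (simp add: field_simps)

lemma mult_eq_to_ratio: "X * y = Y * z \<Longrightarrow> y \<noteq> 0 \<Longrightarrow> X = Y * (z / (y::complex))"
  by (simp add: field_simps)

lemma re_pos_nz: "Re (z::complex) > 0 \<Longrightarrow> z \<noteq> 0" by auto

theorem mainTheorem13:
  fixes v a b c :: complex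
  assumes "Re v < 4" and "Re c > 0"
    and "Re (v * c + a + b) > 0" and "Re (v * c + a - b) > 0"
    and "Re (v * c - a + b) > 0" and "Re (v * c - a - b) > 0"
    and "v / 2 \<notin> \<int>\<^sub>\<le>\<^sub>0"
    and "1 + (v/2 - a/(2*c) - b/(2*c)) \<notin> \<int>\<^sub>\<le>\<^sub>0"
    and "1 + (v/2 - a/(2*c) + b/(2*c)) \<notin> \<int>\<^sub>\<le>\<^sub>0"
    and "1 + (v/2 + a/(2*c) + b/(2*c)) \<notin> \<int>\<^sub>\<le>\<^sub>0"
    and "1 + (v/2 + a/(2*c) - b/(2*c)) \<notin> \<int>\<^sub>\<le>\<^sub>0"
  shows "let s3 = v/2 - a/(2*c) - b/(2*c); s4 = v/2 - a/(2*c) + b/(2*c);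
             s5 = v/2 + a/(2*c) + b/(2*c); s6 = v/2 + a/(2*c) - b/(2*c);
             P = (v * c - a - b) * (v * c + a + b) * (v * c - a + b) * (v * c + a - b)
         in ((\<lambda>x::real. sinh (a * of_real x) * sinh (b * of_real x) / cosh_pow v (c * of_real x))
              has_integral
              (2 powr (v + 1) * v * a * b * c / P *
               hypergeom_pFq [v, 1 + v/2, s3, s5, s4, s6] [v/2, 1 + s3, 1 + s5, 1 + s4, 1 + s6] (-1)))
            {0<..}"
proof -
  note v4 = assms(1) and c = assms(2) and h1 = assms(3) and h2 = assms(4) and h3 = assms(5) and h4 = assms(6)
  define s3 where "s3 = v/2 - a/(2*c) - b/(2*c)"
  define s4 where "s4 = v/2 - a/(2*c) + b/(2*c)"
  define s5 where "s5 = v/2 + a/(2*c) + b/(2*c)"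
  define s6 where "s6 = v/2 + a/(2*c) - b/(2*c)"
  define P where "P = (v * c - a - b) * (v * c + a + b) * (v * c - a + b) * (v * c + a - b)"
  define J where "J k = (1/((v + 2 * of_nat k) * c - (a+b)) - 1/((v + 2 * of_nat k) * c - (a-b))
               - 1/((v + 2 * of_nat k) * c + (a-b)) + 1/((v + 2 * of_nat k) * c + (a+b))) / 4" for k :: nat
  obtain I where sums0: "(\<lambda>k. 2 powr v * ((-v) gchoose k) * J k) sums I"
    and int: "((\<lambda>x::real. sinh (a * of_real x) * sinh (b * of_real x) / cosh_pow v (c * of_real x))
              has_integral I) {0<..}"
    using main_sum[OF v4 c h1 h2 h3 h4] unfolding J_def by blast
  define T where "T n = pochhammer v n * (pochhammer (1 + v/2) n * (pochhammer s3 n * (pochhammer s5 n *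
        (pochhammer s4 n * pochhammer s6 n)))) / (pochhammer (v/2) n * (pochhammer (1 + s3) n *
        (pochhammer (1 + s5) n * (pochhammer (1 + s4) n * pochhammer (1 + s6) n)))) * (-1) ^ n / of_nat (fact n)"
    for n
  have hyp: "hypergeom_pFq [v, 1 + v/2, s3, s5, s4, s6] [v/2, 1 + s3, 1 + s5, 1 + s4, 1 + s6] (-1) = suminf T"
    unfolding hypergeom_pFq_def T_def[abs_def] by simp
  define Cst where "Cst = 2 powr (v + 1) * v * a * b * c / P"
  have c0: "c \<noteq> 0" using c by auto
  have v0: "v \<noteq> 0" using assms(7) by auto
  have e1: "v * c - a - b \<noteq> 0" using re_pos_nz[OF h4] .
  have e2: "v * c + a + b \<noteq> 0" using re_pos_nz[OF h1] .
  have e3: "v * c - a + b \<noteq> 0" using re_pos_nz[OF h3] .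
  have e4: "v * c + a - b \<noteq> 0" using re_pos_nz[OF h2] .
  have fpos: "Re ((v + 2 * of_nat n) * c - (a+b)) > 0" "Re ((v + 2 * of_nat n) * c - (a-b)) > 0"
     "Re ((v + 2 * of_nat n) * c + (a-b)) > 0" "Re ((v + 2 * of_nat n) * c + (a+b)) > 0" for n :: nat
  proof -
    have uk: "(v + 2 * of_nat n) * c = v * c + of_real (2 * real n) * c" by (simp add: algebra_simps)
    have p: "0 \<le> 2 * real n * Re c" using c by simp
    show "Re ((v + 2 * of_nat n) * c - (a+b)) > 0" unfolding uk using h4 p by (auto simp: algebra_simps)
    show "Re ((v + 2 * of_nat n) * c - (a-b)) > 0" unfolding uk using h3 p by (auto simp: algebra_simps)
    show "Re ((v + 2 * of_nat n) * c + (a-b)) > 0" unfolding uk using h2 p by (auto simp: algebra_simps)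
    show "Re ((v + 2 * of_nat n) * c + (a+b)) > 0" unfolding uk using h1 p by (auto simp: algebra_simps)
  qed
  have f0: "(v + 2 * of_nat n) * c - (a+b) \<noteq> 0" "(v + 2 * of_nat n) * c - (a-b) \<noteq> 0"
     "(v + 2 * of_nat n) * c + (a-b) \<noteq> 0" "(v + 2 * of_nat n) * c + (a+b) \<noteq> 0" for n :: nat
    using re_pos_nz[OF fpos(1)[of n]] re_pos_nz[OF fpos(2)[of n]] re_pos_nz[OF fpos(3)[of n]] re_pos_nz[OF fpos(4)[of n]] by auto
  have sig: "s3 = (v * c - a - b) / (2*c)" "s5 = (v * c + a + b) / (2*c)"
            "s4 = (v * c - a + b) / (2*c)" "s6 = (v * c + a - b) / (2*c)"
    unfolding s3_def s4_def s5_def s6_def using c0 by (simp_all add: field_simps)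
  have sn: "s3 \<noteq> 0" "s5 \<noteq> 0" "s4 \<noteq> 0" "s6 \<noteq> 0" using e1 e2 e3 e4 c0 by (simp_all add: sig)
  have key: "Cst * T n = 2 powr v * ((-v) gchoose n) * J n" for n
  proof -
    define R where "R = ((v/2 + of_nat n) / (v/2)) * (s3 / (s3 + of_nat n)) * (s5 / (s5 + of_nat n))
                          * (s4 / (s4 + of_nat n)) * (s6 / (s6 + of_nat n))"
    have pr1: "pochhammer (1 + v/2) n = pochhammer (v/2) n * ((v/2 + of_nat n) / (v/2))"
      using mult_eq_to_ratio[OF poch_shift[of "v/2" n]] v0 by simp
    have TR: "T n = (pochhammer v n * (-1) ^ n / of_nat (fact n)) * R"
      unfolding T_def R_def
      by (rule T_rearrange[OF poch_nonzero[OF assms(7)] poch_nonzero[OF assms(8)[folded s3_def]]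
            poch_nonzero[OF assms(10)[folded s5_def]] poch_nonzero[OF assms(9)[folded s4_def]]
            poch_nonzero[OF assms(11)[folded s6_def]] pr1
            poch_ratio(1)[OF assms(8)[folded s3_def] sn(1)] poch_ratio(1)[OF assms(10)[folded s5_def] sn(2)]
            poch_ratio(1)[OF assms(9)[folded s4_def] sn(3)] poch_ratio(1)[OF assms(11)[folded s6_def] sn(4)]])
    have AI: "2 * v * a * b * c / P * R = J n"
      unfolding P_def R_def J_def s3_def s4_def s5_def s6_def
      using alg_identity[OF c0 v0 f0(1) f0(2) f0(3) f0(4) e1 e2 e3 e4] by (simp only: mult.assoc)
    have gb: "(-v) gchoose n = (-1) ^ n * pochhammer v n / fact n"
      by (simp add: gbinomial_pochhammer)
    have p2: "(2::complex) powr (v + 1) = 2 * 2 powr v"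
      by (simp add: powr_add complex_powr_one)
    have "Cst * T n = 2 powr v * ((-1) ^ n * pochhammer v n / fact n) * (2 * v * a * b * c / P * R)"
      unfolding Cst_def TR p2 by (simp add: mult_ac)
    then show ?thesis unfolding AI gb by simp
  qed
  have sums1: "(\<lambda>n. Cst * T n) sums I" using sums0 by (simp add: key)
  have "Cst * suminf T = I"
  proof (cases "Cst = 0")
    case True
    then have "(\<lambda>n. 0::complex) sums I" using sums1 by simp
    then have "I = 0" using sums_zero sums_unique2 by blast
    then show ?thesis using True by simp
  next
    case False
    have "(\<lambda>n. inverse Cst * (Cst * T n)) sums (inverse Cst * I)" by (rule sums_mult[OF sums1])
    moreover have "(\<lambda>n. inverse Cst * (Cst * T n)) = T" using False by (auto simp: fun_eq_iff field_simps)
    ultimately have "T sums (inverse Cst * I)" by simp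
    then have "suminf T = inverse Cst * I" by (rule sums_unique[symmetric])
    then show ?thesis using False by simp
  qed
  then show ?thesis
    unfolding Let_def s3_def[symmetric] s4_def[symmetric] s5_def[symmetric] s6_def[symmetric] P_def[symmetric]
    using int unfolding hyp Cst_def[symmetric] by simp
qed

end
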